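(* Let $p\ge2$ and, for $\tau=1,\dots,p$, let $\hat f_\tau:\mathbb{R}^n\to\mathbb{R}$ be $\mu$-strongly convex and $\hat c_\tau:\mathbb{R}^n\times\mathbb{R}^n\times\mathbb{R}^r\to\mathbb{R}$ be convex and $\ell$-strongly smooth, all twice continuously differentiable. For an initial state $\hat x_0\in\mathbb{R}^n$, disturbances $\hat w=(\hat w_0,\dots,\hat w_{p-1})$ with $\hat w_\tau\in\mathbb{R}^r$, and a terminal state $\hat x_p\in\mathbb{R}^n$, let \[\hat\psi(\hat x_0,\hat w,\hat x_p) := \arg\min_{\hat x_{1:p-1}}\sum_{\tau=1}^{p-1}\hat f_\tau(\hat x_\tau) + \sum_{\tau=1}^p\hat c_\tau(\hat x_\tau,\hat x_{\tau-1},\hat w_{\tau-1}),\] indexed by $1,\dots,p-1$. Then for any two tuples $(\hat x_0,\hat w,\hat x_p)$ and $(\hat x_0',\hat w',\hat x_p')$ and all $1\le h\le p-1$, \[\|\hat\psi(\hat x_0,\hat w,\hat x_p)_h - \hat\psi(\hat x_0',\hat w',\hat x_p')_h\| \le C_0\left(\lambda_0^{h-1}\|\hat x_0-\hat x_0'\| + \sum_{\tau=0}^{p-1}\lambda_0^{|h-\tau|-1}\|\hat w_\tau-\hat w_\tau'\| + \lambda_0^{p-h-1}\|\hat x_p-\hat x_p'\|\right),\] where $C_0 = 2\ell/\mu$ and $\lambda_0 = 1 - 2\left(\sqrt{1+2\ell/\mu}+1\right)^{-1}$.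
   Context: Norms are Euclidean. A function $g$ is $\ell$-strongly smooth if $g(y)\le g(x)+\langle\nabla g(x),y-x\rangle+\frac\ell2\|y-x\|^2$ for all $x,y$, and $m$-strongly convex if $g(y)\ge g(x)+\langle\nabla g(x),y-x\rangle+\frac m2\|y-x\|^2$ for all $x,y$. *)

theory Defs
  imports "HOL-Analysis.Analysis"
begin

text \<open>Gradient-based notions for real-valued functions on a Euclidean space
  (norms/inner products are Euclidean; on product types the inner product is the
  sum of the component inner products, i.e. the Euclidean one on the concatenation).\<close>

definition has_gradient_everywhere :: "('a::euclidean_space \<Rightarrow> real) \<Rightarrow> ('a \<Rightarrow> 'a) \<Rightarrow> bool" where
  "has_gradient_everywhere g G \<longleftrightarrow> (\<forall>x. (g has_derivative (\<lambda>h. G x \<bullet> h)) (at x))"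

definition strongly_convex :: "real \<Rightarrow> ('a::euclidean_space \<Rightarrow> real) \<Rightarrow> bool" where
  "strongly_convex m g \<longleftrightarrow> (\<exists>G. has_gradient_everywhere g G \<and>
     (\<forall>x y. g y \<ge> g x + G x \<bullet> (y - x) + m / 2 * (norm (y - x))\<^sup>2))"

definition strongly_smooth :: "real \<Rightarrow> ('a::euclidean_space \<Rightarrow> real) \<Rightarrow> bool" where
  "strongly_smooth l g \<longleftrightarrow> (\<exists>G. has_gradient_everywhere g G \<and>
     (\<forall>x y. g y \<le> g x + G x \<bullet> (y - x) + l / 2 * (norm (y - x))\<^sup>2))"

definition C2 :: "('a::euclidean_space \<Rightarrow> real) \<Rightarrow> bool" where
  "C2 g \<longleftrightarrow> (\<exists>G H. has_gradient_everywhere g G \<and>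
     (\<forall>x. (G has_derivative blinfun_apply (H x)) (at x)) \<and> continuous_on UNIV H)"

definition traj :: "nat \<Rightarrow> 'a \<Rightarrow> 'a \<Rightarrow> (nat \<Rightarrow> 'a) \<Rightarrow> nat \<Rightarrow> 'a" where
  "traj p x0 xp xs \<tau> = (if \<tau> = 0 then x0 else if \<tau> = p then xp else xs \<tau>)"

definition objective ::
  "(nat \<Rightarrow> 'a \<Rightarrow> real) \<Rightarrow> (nat \<Rightarrow> 'a \<times> 'a \<times> 'b \<Rightarrow> real) \<Rightarrow> nat
    \<Rightarrow> 'a \<Rightarrow> (nat \<Rightarrow> 'b) \<Rightarrow> 'a \<Rightarrow> (nat \<Rightarrow> 'a) \<Rightarrow> real" where
  "objective f c p x0 w xp xs =
     (\<Sum>\<tau>=1..p-1. f \<tau> (traj p x0 xp xs \<tau>)) +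
     (\<Sum>\<tau>=1..p. c \<tau> (traj p x0 xp xs \<tau>, traj p x0 xp xs (\<tau>-1), w (\<tau>-1)))"

text \<open>The arg-min over the intermediate states x_1..x_{p-1} (only those entries matter;
  the minimiser is unique under the hypotheses of the theorem).\<close>
definition psi ::
  "(nat \<Rightarrow> 'a \<Rightarrow> real) \<Rightarrow> (nat \<Rightarrow> 'a \<times> 'a \<times> 'b \<Rightarrow> real) \<Rightarrow> nat
    \<Rightarrow> 'a \<Rightarrow> (nat \<Rightarrow> 'b) \<Rightarrow> 'a \<Rightarrow> nat \<Rightarrow> 'a" where
  "psi f c p x0 w xp = (SOME xs. \<forall>ys. objective f c p x0 w xp xs \<le> objective f c p x0 w xp ys)"

end

theory Submission
  imports Defs
begin


lemma convex_grad_ineq: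
  fixes g :: "'a::euclidean_space \<Rightarrow> real"
  assumes cv: "convex_on UNIV g" and d: "\<And>x. (g has_derivative (\<lambda>h. G x \<bullet> h)) (at x)"
  shows "g y \<ge> g x + G x \<bullet> (y - x)"
proof -
  define \<phi> where "\<phi> = (\<lambda>t::real. g (x + t *\<^sub>R (y - x)))"
  have cphi: "convex_on UNIV \<phi>"
  proof (rule convex_onI)
    fix t a b :: real assume t: "0 < t" "t < 1"
    have "x + ((1 - t) * a + t * b) *\<^sub>R (y - x) = (1 - t) *\<^sub>R (x + a *\<^sub>R (y - x)) + t *\<^sub>R (x + b *\<^sub>R (y - x))"
      by (simp add: algebra_simps)
    then show "\<phi> ((1 - t) *\<^sub>R a + t *\<^sub>R b) \<le> (1 - t) * \<phi> a + t * \<phi> b"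
      unfolding \<phi>_def using convex_onD[OF cv, of t "x + a *\<^sub>R (y - x)" "x + b *\<^sub>R (y - x)"] t
      by simp
  qed simp
  have lin: "((\<lambda>t::real. x + t *\<^sub>R (y - x)) has_derivative (\<lambda>t. t *\<^sub>R (y - x))) (at 0)"
    by (auto intro!: derivative_eq_intros)
  have "(\<phi> has_derivative (\<lambda>t. G (x + 0 *\<^sub>R (y - x)) \<bullet> (t *\<^sub>R (y - x)))) (at 0)"
    unfolding \<phi>_def using has_derivative_compose[OF lin d] by simp
  then have "(\<phi> has_derivative (\<lambda>t. (G x \<bullet> (y - x)) * t)) (at 0)"
    by (simp add: mult.commute)
  then have "(\<phi> has_field_derivative (G x \<bullet> (y - x))) (at 0 within UNIV)"
    by (simp add: has_field_derivative_def)
  from convex_on_imp_above_tangent[OF cphi _ _ _ this, of 1]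
  have "\<phi> 1 - \<phi> 0 \<ge> G x \<bullet> (y - x)" by simp
  then show ?thesis unfolding \<phi>_def by simp
qed

lemma cocoercive:
  fixes g :: "'a::real_inner \<Rightarrow> real"
  assumes l: "l > 0"
    and cv: "\<And>x y. g y \<ge> g x + G x \<bullet> (y - x)"
    and sm: "\<And>x y. g y \<le> g x + G x \<bullet> (y - x) + l / 2 * (norm (y - x))\<^sup>2"
  shows "(G x - G y) \<bullet> (x - y) \<ge> (norm (G x - G y))\<^sup>2 / l"
proof -
  define D where "D = G y - G x"
  have a1: "g (y - (1/l) *\<^sub>R D) \<ge> g x + G x \<bullet> (y - (1/l) *\<^sub>R D - x)" by (rule cv)
  have a2: "g (y - (1/l) *\<^sub>R D) \<le> g y + G y \<bullet> (- (1/l) *\<^sub>R D) + l / 2 * (norm (- (1/l) *\<^sub>R D))\<^sup>2"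
    using sm[where x=y and y="y - (1/l) *\<^sub>R D"] by simp
  have b1: "g (x + (1/l) *\<^sub>R D) \<ge> g y + G y \<bullet> (x + (1/l) *\<^sub>R D - y)" by (rule cv)
  have b2: "g (x + (1/l) *\<^sub>R D) \<le> g x + G x \<bullet> ((1/l) *\<^sub>R D) + l / 2 * (norm ((1/l) *\<^sub>R D))\<^sup>2"
    using sm[where x=x and y="x + (1/l) *\<^sub>R D"] by simp
  have n: "(norm ((1/l) *\<^sub>R D))\<^sup>2 = (norm D)\<^sup>2 / l\<^sup>2" "(norm (- (1/l) *\<^sub>R D))\<^sup>2 = (norm D)\<^sup>2 / l\<^sup>2"
    using l by (auto simp: power_divide)
  have e: "G y \<bullet> D - G x \<bullet> D = (norm D)\<^sup>2"
    by (simp add: D_def inner_diff_left power2_norm_eq_inner)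
  have "G x \<bullet> (y - x) + G y \<bullet> (x - y) + (1/l) * (norm D)\<^sup>2 \<le> 0"
    using a1 a2 b1 b2 n e l
    by (simp add: inner_diff_right inner_add_right algebra_simps power2_eq_square divide_simps)
  then have "(1/l) * (norm D)\<^sup>2 \<le> (G y - G x) \<bullet> (y - x)"
    by (simp add: inner_diff_right inner_diff_left algebra_simps)
  moreover have "(G y - G x) \<bullet> (y - x) = (G x - G y) \<bullet> (x - y)"
    by (simp add: inner_diff_right inner_diff_left algebra_simps)
  moreover have "norm D = norm (G x - G y)" by (simp add: D_def norm_minus_commute)
  ultimately show ?thesis by simp
qed

lemma strong_mono:
  fixes g :: "'a::real_inner \<Rightarrow> real"
  assumes sc: "\<And>x y. g y \<ge> g x + G x \<bullet> (y - x) + m / 2 * (norm (y - x))\<^sup>2"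
  shows "(G x - G y) \<bullet> (x - y) \<ge> m * (norm (x - y))\<^sup>2"
proof -
  have "g y \<ge> g x + G x \<bullet> (y - x) + m / 2 * (norm (y - x))\<^sup>2" by (rule sc)
  moreover have "g x \<ge> g y + G y \<bullet> (x - y) + m / 2 * (norm (x - y))\<^sup>2" by (rule sc)
  moreover have "norm (y - x) = norm (x - y)" by (rule norm_minus_commute)
  ultimately show ?thesis by (simp add: inner_diff_right inner_diff_left algebra_simps)
qed

lemma ball_bound:
  fixes g d y :: "'a::real_inner"
  assumes l: "l > 0" and c: "g \<bullet> d \<ge> (norm g)\<^sup>2 / l"
  shows "g \<bullet> y \<ge> l / 2 * (d \<bullet> y - norm d * norm y)"
proof -
  have "(norm (g - (l/2) *\<^sub>R d))\<^sup>2 = (g - (l/2) *\<^sub>R d) \<bullet> (g - (l/2) *\<^sub>R d)"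
    by (simp only: power2_norm_eq_inner)
  also have "\<dots> = g \<bullet> g - l * (g \<bullet> d) + (l/2)\<^sup>2 * (d \<bullet> d)"
    by (simp add: inner_diff_left inner_diff_right algebra_simps power2_eq_square inner_commute)
  also have "\<dots> = (norm g)\<^sup>2 - l * (g \<bullet> d) + (l/2)\<^sup>2 * (norm d)\<^sup>2"
    by (simp only: power2_norm_eq_inner)
  also have "\<dots> \<le> (l/2)\<^sup>2 * (norm d)\<^sup>2" using c l by (simp add: divide_simps mult.commute)
  finally have "norm (g - (l/2) *\<^sub>R d) \<le> l/2 * norm d"
    using l by (metis abs_of_nonneg norm_ge_zero power2_le_imp_le power_mult_distrib zero_le_mult_iff less_eq_real_def half_gt_zero)
  then have "\<bar>(g - (l/2) *\<^sub>R d) \<bullet> y\<bar> \<le> l/2 * norm d * norm y"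
    by (meson Cauchy_Schwarz_ineq2 mult_right_mono norm_ge_zero order_trans)
  then have "(g - (l/2) *\<^sub>R d) \<bullet> y \<ge> - (l/2 * norm d * norm y)" by linarith
  then show ?thesis by (simp add: inner_diff_left algebra_simps)
qed



lemma kantorovich_aux:
  fixes A B P R lam c :: real
  assumes "A \<ge> 0" "B \<ge> 0" "P > 0" "lam > 0" "R = lam\<^sup>2 * P" "2 * lam * c = 1 + lam\<^sup>2"
  shows "(A + B) * (P\<^sup>2 * A + R\<^sup>2 * B) \<le> c\<^sup>2 * (P * A + R * B)\<^sup>2"
proof -
  have c2: "4 * lam\<^sup>2 * c\<^sup>2 = (1 + lam\<^sup>2)\<^sup>2"
  proof -
    have "(2 * lam * c)\<^sup>2 = (1 + lam\<^sup>2)\<^sup>2" using assms(6) by simp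
    then show ?thesis by (simp add: power_mult_distrib)
  qed
  have id: "(1 + lam\<^sup>2)\<^sup>2 * (P * A + lam\<^sup>2 * P * B)\<^sup>2 - 4 * lam\<^sup>2 * ((A + B) * (P\<^sup>2 * A + (lam\<^sup>2 * P)\<^sup>2 * B))
      = P\<^sup>2 * ((1 - lam\<^sup>2) * (A - lam\<^sup>2 * B))\<^sup>2"
    by algebra
  have "4 * lam\<^sup>2 * (c\<^sup>2 * (P * A + R * B)\<^sup>2) = (1 + lam\<^sup>2)\<^sup>2 * (P * A + lam\<^sup>2 * P * B)\<^sup>2"
    using c2 assms(5) by (metis mult.assoc)
  moreover have "0 \<le> P\<^sup>2 * ((1 - lam\<^sup>2) * (A - lam\<^sup>2 * B))\<^sup>2" by simp
  ultimately have "4 * lam\<^sup>2 * ((A + B) * (P\<^sup>2 * A + R\<^sup>2 * B)) \<le> 4 * lam\<^sup>2 * (c\<^sup>2 * (P * A + R * B)\<^sup>2)"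
    using id unfolding assms(5) by linarith
  then show ?thesis using assms(4) by (simp add: mult_le_cancel_left)
qed



lemma norm_triple_sq:
  fixes a b :: "'a::real_inner" and w :: "'b::real_inner"
  shows "(norm (a, b, w))\<^sup>2 = (norm a)\<^sup>2 + (norm b)\<^sup>2 + (norm w)\<^sup>2"
  by (simp add: power2_norm_eq_inner inner_Pair)

lemma lossy_edge:
  fixes g :: "'a::real_inner \<times> 'a \<times> 'b::real_inner" and a b :: 'a
  assumes l: "l > 0" and mu: "mu > 0" and lam: "lam > 0" "2 * lam * (1 + mu/l) = 1 + lam\<^sup>2"
    and co: "g \<bullet> (a, b, 0) \<ge> (norm g)\<^sup>2 / l"
    and PR: "P > 0" "R > 0" "R = lam\<^sup>2 * P \<or> P = lam\<^sup>2 * R"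
  shows "g \<bullet> (P *\<^sub>R a, R *\<^sub>R b, 0) \<ge> -(mu/2) * (P * (norm a)\<^sup>2 + R * (norm b)\<^sup>2)"
proof -
  define d where "d = (a, b, 0::'b)"
  define y where "y = (P *\<^sub>R a, R *\<^sub>R b, 0::'b)"
  define S where "S = P * (norm a)\<^sup>2 + R * (norm b)\<^sup>2"
  define c where "c = 1 + mu / l"
  have dy: "d \<bullet> y = S" by (simp add: d_def y_def S_def inner_Pair power2_norm_eq_inner)
  have nd: "(norm d)\<^sup>2 = (norm a)\<^sup>2 + (norm b)\<^sup>2" by (simp add: d_def norm_triple_sq)
  have ny: "(norm y)\<^sup>2 = P\<^sup>2 * (norm a)\<^sup>2 + R\<^sup>2 * (norm b)\<^sup>2"
    by (simp add: y_def norm_triple_sq power_mult_distrib)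
  have K: "((norm a)\<^sup>2 + (norm b)\<^sup>2) * (P\<^sup>2 * (norm a)\<^sup>2 + R\<^sup>2 * (norm b)\<^sup>2) \<le> c\<^sup>2 * S\<^sup>2"
    using PR(3)
  proof
    assume "R = lam\<^sup>2 * P"
    from kantorovich_aux[of "(norm a)\<^sup>2" "(norm b)\<^sup>2" P lam R c, OF _ _ PR(1) lam(1) this]
    show ?thesis using lam(2) by (simp add: c_def S_def mult.commute)
  next
    assume "P = lam\<^sup>2 * R"
    from kantorovich_aux[of "(norm b)\<^sup>2" "(norm a)\<^sup>2" R lam P c, OF _ _ PR(2) lam(1) this]
    show ?thesis using lam(2) by (simp add: c_def S_def mult.commute add.commute)
  qed
  have "(norm d * norm y)\<^sup>2 \<le> (c * S)\<^sup>2"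
    using K by (simp add: power_mult_distrib nd ny)
  moreover have "c * S \<ge> 0" using l mu PR by (simp add: c_def S_def)
  ultimately have "norm d * norm y \<le> c * S" by (rule power2_le_imp_le)
  moreover have "g \<bullet> y \<ge> l / 2 * (d \<bullet> y - norm d * norm y)"
    by (rule ball_bound[OF l]) (use co in \<open>simp add: d_def\<close>)
  ultimately have "g \<bullet> y \<ge> l / 2 * (S - c * S)"
  proof -
    assume a: "norm d * norm y \<le> c * S" and b: "l / 2 * (d \<bullet> y - norm d * norm y) \<le> g \<bullet> y"
    have "l / 2 * (S - c * S) \<le> l / 2 * (d \<bullet> y - norm d * norm y)"
      using a l dy by (intro mult_left_mono) auto
    then show ?thesis using b by linarith
  qed
  also have "l / 2 * (S - c * S) = -(mu/2) * S" using l by (simp add: c_def field_simps)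
  finally show ?thesis by (simp add: y_def S_def)
qed

lemma source_edge:
  fixes g d e :: "'a::real_inner"
  assumes l: "l > 0" and co: "g \<bullet> (d + e) \<ge> (norm g)\<^sup>2 / l"
  shows "g \<bullet> d \<ge> - (l * norm e * norm d)"
proof -
  have b: "g \<bullet> d \<ge> l / 2 * ((d + e) \<bullet> d - norm (d + e) * norm d)"
    by (rule ball_bound[OF l co])
  have "(d + e) \<bullet> d = (norm d)\<^sup>2 + e \<bullet> d" by (simp add: inner_add_left power2_norm_eq_inner)
  moreover have "e \<bullet> d \<ge> - (norm e * norm d)"
    using Cauchy_Schwarz_ineq2[of e d] by linarith
  moreover have "norm (d + e) * norm d \<le> (norm d + norm e) * norm d"
    by (simp add: mult_right_mono norm_triangle_ineq)
  ultimately have "(d + e) \<bullet> d - norm (d + e) * norm d \<ge> - 2 * (norm e * norm d)"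
    by (simp add: algebra_simps power2_eq_square)
  then have "l / 2 * ((d + e) \<bullet> d - norm (d + e) * norm d) \<ge> l / 2 * (- 2 * (norm e * norm d))"
    using l by (intro mult_left_mono) auto
  then show ?thesis using b by simp
qed



lemma regroup:
  fixes a b y :: "nat \<Rightarrow> 'a::real_inner"
  assumes y0: "y 0 = 0" and yp: "y p = 0" and p: "p \<ge> 1"
  shows "(\<Sum>\<tau>=1..p. a \<tau> \<bullet> y \<tau> + b \<tau> \<bullet> y (\<tau>-1)) = (\<Sum>t=1..p-1. (a t + b (t+1)) \<bullet> y t)"
proof -
  obtain q where q: "p = Suc q" using p by (cases p) auto
  have 1: "(\<Sum>\<tau>=1..p. a \<tau> \<bullet> y \<tau>) = (\<Sum>t=1..p-1. a t \<bullet> y t)"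
    using yp by (simp add: q sum.cl_ivl_Suc)
  have "(\<Sum>\<tau>=1..p. b \<tau> \<bullet> y (\<tau>-1)) = (\<Sum>t=0..q. b (Suc t) \<bullet> y t)"
    unfolding q One_nat_def sum.shift_bounds_cl_Suc_ivl by simp
  also have "\<dots> = (\<Sum>t=1..p-1. b (t+1) \<bullet> y t)"
    using y0 by (simp add: q sum.atLeast_Suc_atMost)
  finally show ?thesis using 1 by (simp add: sum.distrib inner_add_left)
qed



lemma nat_steps:
  fixes s h t :: nat
  assumes "t \<ge> 1" and f: "\<And>t. f t = (if s \<le> h then h - min h (max t s) else max h (min t (s-1)) - h)"
  shows "f (t-1) = f t \<or> f (t-1) = f t + 1 \<or> f t = f (t-1) + 1"
proof (cases "s \<le> h")
  case True then show ?thesis using assms(1) unfolding f by (simp add: min_def max_def) arith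
next
  case False then show ?thesis using assms(1) unfolding f by (simp add: min_def max_def) arith
qed

lemma nat_F5:
  fixes s h :: nat
  assumes "h \<noteq> s" "h \<noteq> s - 1" "h \<ge> 1" "s \<ge> 1"
    and f: "\<And>t. f t = (if s \<le> h then h - min h (max t s) else max h (min t (s-1)) - h)"
  shows "f (h - 1) = f h \<or> f (h + 1 - 1) = f (h+1)"
proof (cases "s \<le> h")
  case True then show ?thesis using assms(1-4) unfolding f by (simp add: min_def max_def)
next
  case False then show ?thesis using assms(1-4) unfolding f by (simp add: min_def max_def)
qed


lemma nat_es:
  fixes s h :: nat
  assumes "s \<ge> 1"
    and f: "\<And>t. f t = (if s \<le> h then h - min h (max t s) else max h (min t (s-1)) - h)"
  shows "f s = (if s \<le> h then h - s else s - 1 - h) \<and> f (s-1) = (if s \<le> h then h - s else s - 1 - h) \<and> f h = 0"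
proof (cases "s \<le> h")
  case True then show ?thesis using assms(1) unfolding f by (simp add: min_def max_def)
next
  case False then show ?thesis using assms(1) unfolding f by (simp add: min_def max_def)
qed

lemma inner_triple:
  fixes g :: "'a::real_inner \<times> 'a \<times> 'b::real_inner"
  shows "g \<bullet> (a, b, 0) = fst g \<bullet> a + fst (snd g) \<bullet> b"
  by (cases g) (auto simp: inner_Pair)



lemma key:
  fixes Gf :: "nat \<Rightarrow> 'a::real_inner \<Rightarrow> 'a" and Gc :: "nat \<Rightarrow> 'a \<times> 'a \<times> 'b::real_inner \<Rightarrow> 'a \<times> 'a \<times> 'b"
    and X X' :: "nat \<Rightarrow> 'a" and W W' :: "nat \<Rightarrow> 'b"
  assumes p: "p \<ge> 2" and mu: "mu > 0" and l: "l > 0"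
    and lam: "lam > 0" "2 * lam * (1 + mu/l) = 1 + lam\<^sup>2"
    and mono: "\<And>t x y. t \<in> {1..p-1} \<Longrightarrow> (Gf t x - Gf t y) \<bullet> (x - y) \<ge> mu * (norm (x - y))\<^sup>2"
    and coco: "\<And>\<tau> z z'. \<tau> \<in> {1..p} \<Longrightarrow> (Gc \<tau> z - Gc \<tau> z') \<bullet> (z - z') \<ge> (norm (Gc \<tau> z - Gc \<tau> z'))\<^sup>2 / l"
    and foc: "\<And>t. t \<in> {1..p-1} \<Longrightarrow> Gf t (X t) + fst (Gc t (X t, X (t-1), W (t-1))) + fst (snd (Gc (t+1) (X (t+1), X t, W t))) = 0"
    and foc': "\<And>t. t \<in> {1..p-1} \<Longrightarrow> Gf t (X' t) + fst (Gc t (X' t, X' (t-1), W' (t-1))) + fst (snd (Gc (t+1) (X' (t+1), X' t, W' t))) = 0"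
    and s: "s \<in> {1..p}"
    and single: "\<And>\<tau>. \<tau> \<in> {1..p} \<Longrightarrow> \<tau> \<noteq> s \<Longrightarrow> (\<tau> = p \<longrightarrow> X p = X' p) \<and> (\<tau> = 1 \<longrightarrow> X 0 = X' 0) \<and> W (\<tau>-1) = W' (\<tau>-1)"
    and h: "h \<in> {1..p-1}"
  shows "norm (X h - X' h) \<le> 2 * l / mu * lam ^ (if s \<le> h then h - s else s - 1 - h) *
     norm (if s = p then X p - X' p else 0, if s = 1 then X 0 - X' 0 else 0, W (s-1) - W' (s-1))"
proof -
  define U where "U t = (if t \<in> {1..p-1} then X t - X' t else 0)" for t
  define Z where "Z \<tau> = (X \<tau>, X (\<tau>-1), W (\<tau>-1))" for \<tau>
  define Z' where "Z' \<tau> = (X' \<tau>, X' (\<tau>-1), W' (\<tau>-1))" for \<tau>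
  define \<delta> where "\<delta> = (if s = p then X p - X' p else 0, if s = 1 then X 0 - X' 0 else 0, W (s-1) - W' (s-1))"
  have U0: "U 0 = 0" and Up: "U p = 0" by (auto simp: U_def)
  have Zdiff: "Z \<tau> - Z' \<tau> = (U \<tau>, U (\<tau>-1), 0) + (if \<tau> = s then \<delta> else 0)" if \<tau>: "\<tau> \<in> {1..p}" for \<tau>
  proof (cases "\<tau> = s")
    case True
    then show ?thesis using \<tau> p by (auto simp: Z_def Z'_def U_def \<delta>_def)
  next
    case False
    note sg = single[OF \<tau> False]
    have "X \<tau> - X' \<tau> = U \<tau>" using \<tau> sg by (cases "\<tau> = p") (auto simp: U_def)
    moreover have "X (\<tau>-1) - X' (\<tau>-1) = U (\<tau>-1)"
    proof (cases "\<tau> = 1")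
      case True then show ?thesis using sg by (simp add: U_def)
    next
      case False then show ?thesis using \<tau> by (auto simp: U_def)
    qed
    ultimately show ?thesis using False sg by (simp add: Z_def Z'_def)
  qed
  define e :: "nat \<Rightarrow> nat" where "e t = (if s \<le> h then h - min h (max t s) else max h (min t (s-1)) - h)" for t
  define \<rho> where "\<rho> t = lam ^ (2 * e t)" for t
  define L where "L \<tau> = (e \<tau> \<noteq> e (\<tau>-1))" for \<tau>
  define dist where "dist = (if s \<le> h then h - s else s - 1 - h)"
  have eh: "e h = 0" and es: "e s = dist" "e (s-1) = dist"
    using nat_es[of s e h, OF _ e_def] s unfolding dist_def by auto
  have F3: "e (\<tau>-1) = e \<tau> + 1 \<or> e \<tau> = e (\<tau>-1) + 1" if "L \<tau>" "\<tau> \<ge> 1" for \<tau>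
    using that nat_steps[of \<tau> e s h, OF _ e_def] by (auto simp: L_def)
  have F4: "\<not> L s" using es by (simp add: L_def)
  have F5: "\<not> L h \<or> \<not> L (h+1)" if "h \<noteq> s" "h \<noteq> s - 1"
    using nat_F5[of h s e, OF that _ _ e_def] h s by (auto simp: L_def)
  have \<rho>pos: "\<rho> t > 0" for t using lam by (simp add: \<rho>_def)
  have \<rho>h: "\<rho> h = 1" by (simp add: \<rho>_def eh)
  have \<rho>s: "\<rho> s = (lam ^ dist)\<^sup>2" "\<rho> (s-1) = \<rho> s" using es by (simp_all add: \<rho>_def power_mult mult.commute)
  define N where "N t = (norm (U t))\<^sup>2" for t
  define y where "y t = \<rho> t *\<^sub>R U t" for t
  define dF where "dF t = Gf t (X t) - Gf t (X' t)" for t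
  define dG where "dG \<tau> = Gc \<tau> (Z \<tau>) - Gc \<tau> (Z' \<tau>)" for \<tau>
  define E where "E \<tau> = dG \<tau> \<bullet> (y \<tau>, y (\<tau>-1), 0)" for \<tau>
  have foc_diff: "dF t + fst (dG t) + fst (snd (dG (t+1))) = 0" if "t \<in> {1..p-1}" for t
  proof -
    have "(Gf t (X t) + fst (Gc t (Z t)) + fst (snd (Gc (t+1) (Z (t+1))))) -
          (Gf t (X' t) + fst (Gc t (Z' t)) + fst (snd (Gc (t+1) (Z' (t+1))))) = 0"
      using foc[OF that] foc'[OF that] by (simp add: Z_def Z'_def)
    then show ?thesis by (simp add: dF_def dG_def algebra_simps)
  qed
  have "0 = (\<Sum>t=1..p-1. (dF t + fst (dG t) + fst (snd (dG (t+1)))) \<bullet> y t)"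
    using foc_diff by simp
  also have "\<dots> = (\<Sum>t=1..p-1. dF t \<bullet> y t) + (\<Sum>t=1..p-1. (fst (dG t) + fst (snd (dG (t+1)))) \<bullet> y t)"
    by (simp add: inner_add_left sum.distrib add.assoc)
  also have "(\<Sum>t=1..p-1. (fst (dG t) + fst (snd (dG (t+1)))) \<bullet> y t) = (\<Sum>\<tau>=1..p. fst (dG \<tau>) \<bullet> y \<tau> + fst (snd (dG \<tau>)) \<bullet> y (\<tau>-1))"
    by (rule regroup[symmetric]) (use U0 Up p in \<open>auto simp: y_def\<close>)
  also have "\<dots> = (\<Sum>\<tau>=1..p. E \<tau>)"
    by (rule sum.cong) (auto simp: E_def inner_triple)
  finally have sum0: "(\<Sum>t=1..p-1. dF t \<bullet> y t) + (\<Sum>\<tau>=1..p. E \<tau>) = 0" by simp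
  have site: "dF t \<bullet> y t \<ge> mu * (\<rho> t * N t)" if t: "t \<in> {1..p-1}" for t
  proof -
    have "dF t \<bullet> y t = \<rho> t * (dF t \<bullet> (X t - X' t))" using t by (simp add: y_def U_def)
    moreover have "dF t \<bullet> (X t - X' t) \<ge> mu * N t"
      using mono[OF t, of "X t" "X' t"] t by (simp add: dF_def N_def U_def)
    ultimately show ?thesis using \<rho>pos[of t]
      by (metis mult.left_commute mult_left_mono less_eq_real_def)
  qed
  define nd where "nd = norm (U s, U (s-1), 0::'b)"
  define cL where "cL \<tau> = (if L \<tau> then -(mu/2) else (0::real))" for \<tau>
  define lb where "lb \<tau> = (if \<tau> = s then -(\<rho> s * (l * norm \<delta> * nd)) else 0) + (cL \<tau> * (\<rho> \<tau> * N \<tau>) + cL \<tau> * (\<rho> (\<tau>-1) * N (\<tau>-1)))" for \<tau>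
  have edge: "E \<tau> \<ge> lb \<tau>" if \<tau>: "\<tau> \<in> {1..p}" for \<tau>
  proof (cases "\<tau> = s")
    case True
    have ys: "(y \<tau>, y (\<tau>-1), 0::'b) = \<rho> s *\<^sub>R (U s, U (s-1), 0)"
      using True \<rho>s by (simp add: y_def)
    have "dG s \<bullet> ((U s, U (s-1), 0) + \<delta>) \<ge> (norm (dG s))\<^sup>2 / l"
      using coco[OF s, of "Z s" "Z' s"] Zdiff[OF s] by (simp add: dG_def)
    from source_edge[OF l this]
    have "dG s \<bullet> (U s, U (s-1), 0) \<ge> - (l * norm \<delta> * nd)" by (simp add: nd_def)
    then have "\<rho> s * (dG s \<bullet> (U s, U (s-1), 0)) \<ge> \<rho> s * (- (l * norm \<delta> * nd))"
      using \<rho>pos[of s] by (intro mult_left_mono) auto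
    moreover have "cL s = 0" using F4 by (simp add: cL_def)
    ultimately show ?thesis using True ys by (simp add: E_def lb_def inner_triple distrib_left)
  next
    case False
    have Zd: "Z \<tau> - Z' \<tau> = (U \<tau>, U (\<tau>-1), 0)" using Zdiff[OF \<tau>] False by simp
    have co: "dG \<tau> \<bullet> (U \<tau>, U (\<tau>-1), 0) \<ge> (norm (dG \<tau>))\<^sup>2 / l"
      using coco[OF \<tau>, of "Z \<tau>" "Z' \<tau>"] Zd by (simp add: dG_def)
    show ?thesis
    proof (cases "L \<tau>")
      case True
      have "\<rho> (\<tau>-1) = lam\<^sup>2 * \<rho> \<tau> \<or> \<rho> \<tau> = lam\<^sup>2 * \<rho> (\<tau>-1)"
        using F3[OF True] \<tau> by (auto simp: \<rho>_def power_add power_mult)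
      from lossy_edge[OF l mu lam co \<rho>pos \<rho>pos this]
      have "E \<tau> \<ge> -(mu/2) * (\<rho> \<tau> * N \<tau> + \<rho> (\<tau>-1) * N (\<tau>-1))"
        by (simp add: E_def y_def N_def)
      then show ?thesis using True False by (simp add: lb_def cL_def algebra_simps)
    next
      case nL: False
      have "\<rho> (\<tau>-1) = \<rho> \<tau>" using nL by (simp add: L_def \<rho>_def)
      then have "E \<tau> = \<rho> \<tau> * (dG \<tau> \<bullet> (U \<tau>, U (\<tau>-1), 0))" by (simp add: E_def y_def inner_triple distrib_left)
      moreover have "dG \<tau> \<bullet> (U \<tau>, U (\<tau>-1), 0) \<ge> 0"
        using co l by (meson divide_nonneg_pos order_trans zero_le_power2)
      ultimately have "E \<tau> \<ge> 0" using \<rho>pos[of \<tau>] by simp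
      then show ?thesis using False nL by (simp add: lb_def cL_def)
    qed
  qed
  have N0: "N 0 = 0" and Np: "N p = 0" using U0 Up by (simp_all add: N_def)
  have "(\<Sum>\<tau>=1..p. lb \<tau>) = (\<Sum>\<tau>=1..p. (if \<tau> = s then -(\<rho> s * (l * norm \<delta> * nd)) else 0)) + (\<Sum>\<tau>=1..p. cL \<tau> * (\<rho> \<tau> * N \<tau>) + cL \<tau> * (\<rho> (\<tau>-1) * N (\<tau>-1)))"
    unfolding lb_def by (rule sum.distrib)
  also have "(\<Sum>\<tau>=1..p. (if \<tau> = s then -(\<rho> s * (l * norm \<delta> * nd)) else 0)) = -(\<rho> s * (l * norm \<delta> * nd))"
    using s by (simp only: sum.delta finite_atLeastAtMost if_True)
  also have "(\<Sum>\<tau>=1..p. cL \<tau> * (\<rho> \<tau> * N \<tau>) + cL \<tau> * (\<rho> (\<tau>-1) * N (\<tau>-1))) = (\<Sum>t=1..p-1. (cL t + cL (t+1)) * (\<rho> t * N t))"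
  proof -
    have "(\<Sum>\<tau>=1..p. cL \<tau> \<bullet> (\<rho> \<tau> * N \<tau>) + cL \<tau> \<bullet> (\<rho> (\<tau>-1) * N (\<tau>-1))) = (\<Sum>t=1..p-1. (cL t + cL (t+1)) \<bullet> (\<rho> t * N t))"
      by (rule regroup[where y="\<lambda>t. \<rho> t * N t"]) (use N0 Np p in auto)
    then show ?thesis by (simp only: inner_real_def)
  qed
  finally have lbsum: "(\<Sum>\<tau>=1..p. lb \<tau>) = -(\<rho> s * (l * norm \<delta> * nd)) + (\<Sum>t=1..p-1. (cL t + cL (t+1)) * (\<rho> t * N t))" .
  define q where "q t = (mu + cL t + cL (t+1)) * (\<rho> t * N t)" for t
  have cLb: "cL t \<ge> -(mu/2)" "cL t \<le> 0" for t using mu by (auto simp: cL_def)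
  have qnn: "q t \<ge> 0" for t
  proof -
    have "mu + cL t + cL (t+1) \<ge> 0" using cLb[of t] cLb[of "t+1"] by linarith
    then show ?thesis using \<rho>pos[of t] by (simp add: q_def N_def)
  qed
  have "(\<Sum>t=1..p-1. mu * (\<rho> t * N t)) + (\<Sum>\<tau>=1..p. lb \<tau>) \<le> (\<Sum>t=1..p-1. dF t \<bullet> y t) + (\<Sum>\<tau>=1..p. E \<tau>)"
    using site edge by (intro add_mono sum_mono) auto
  then have "(\<Sum>t=1..p-1. mu * (\<rho> t * N t)) + (\<Sum>t=1..p-1. (cL t + cL (t+1)) * (\<rho> t * N t)) \<le> \<rho> s * (l * norm \<delta> * nd)"
    using sum0 lbsum by linarith
  then have qsum: "(\<Sum>t=1..p-1. q t) \<le> \<rho> s * (l * norm \<delta> * nd)"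
    by (simp add: q_def sum.distrib[symmetric] algebra_simps)
  have "(\<Sum>t=0..p. q t) = (\<Sum>t=1..p-1. q t)"
    by (rule sum.mono_neutral_cong_right) (auto simp: q_def N_def U_def)
  then have qT: "(\<Sum>t\<in>T. q t) \<le> \<rho> s * (l * norm \<delta> * nd)" if "T \<subseteq> {0..p}" for T
    using sum_mono2[OF _ that, of q] qnn qsum by simp
  have qs1: "q (s-1) \<ge> mu/2 * (\<rho> s * N (s-1))"
  proof -
    have "cL s = 0" using F4 by (simp add: cL_def)
    then have k: "mu + cL (s-1) + cL (s-1+1) \<ge> mu/2" using cLb[of "s-1"] s by simp
    have Y: "\<rho> (s-1) * N (s-1) \<ge> 0" using \<rho>pos[of "s-1"] by (simp add: N_def)
    have "q (s-1) = (mu + cL (s-1) + cL (s-1+1)) * (\<rho> (s-1) * N (s-1))" by (simp only: q_def)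
    then show ?thesis using mult_right_mono[OF k Y] \<rho>s(2) by simp
  qed
  have qs: "q s \<ge> mu/2 * (\<rho> s * N s)"
  proof -
    have "cL s = 0" using F4 by (simp add: cL_def)
    then have k: "mu + cL s + cL (s+1) \<ge> mu/2" using cLb[of "s+1"] by simp
    have Y: "\<rho> s * N s \<ge> 0" using \<rho>pos[of s] by (simp add: N_def)
    have "q s = (mu + cL s + cL (s+1)) * (\<rho> s * N s)" by (simp only: q_def)
    then show ?thesis using mult_right_mono[OF k Y] by simp
  qed
  have nd2: "nd\<^sup>2 = N s + N (s-1)" by (simp add: nd_def N_def norm_triple_sq)
  have ndnn: "nd \<ge> 0" by (simp add: nd_def)
  have Uh: "norm (X h - X' h) = norm (U h)" using h by (simp add: U_def)
  have two: "mu/2 * (\<rho> s * nd\<^sup>2) \<le> q (s-1) + q s" using qs1 qs nd2 by (simp add: algebra_simps)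
  have s1s: "s - 1 \<noteq> s" using s by auto
  have main: "norm (X h - X' h) \<le> 2 * l / mu * lam ^ dist * norm \<delta>"
  proof (cases "h = s \<or> h = s - 1")
    case True
    have "q (s-1) + q s \<le> \<rho> s * (l * norm \<delta> * nd)"
      using qT[of "{s-1, s}"] s s1s by force
    then have "mu/2 * (\<rho> s * nd\<^sup>2) \<le> \<rho> s * (l * norm \<delta> * nd)" using two by linarith
    then have "mu/2 * nd\<^sup>2 \<le> l * norm \<delta> * nd" using \<rho>pos[of s] by (simp add: algebra_simps)
    then have ndb: "nd \<le> 2 * l / mu * norm \<delta>"
      using mu l ndnn by (cases "nd = 0") (auto simp: power2_eq_square field_simps)
    have "(norm (U h))\<^sup>2 \<le> nd\<^sup>2" using True nd2 by (auto simp: N_def)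
    then have "norm (U h) \<le> nd" using ndnn by (rule power2_le_imp_le)
    moreover have "dist = 0" using True s by (auto simp: dist_def)
    ultimately show ?thesis using ndb Uh by simp
  next
    case False
    have qh: "q h \<ge> mu/2 * N h"
    proof -
      have "\<not> L h \<or> \<not> L (h+1)" using False F5 by auto
      then have k: "mu + cL h + cL (h+1) \<ge> mu/2" using cLb[of h] cLb[of "h+1"] by (auto simp: cL_def)
      have Y: "\<rho> h * N h \<ge> 0" using \<rho>pos[of h] by (simp add: N_def)
      have "q h = (mu + cL h + cL (h+1)) * (\<rho> h * N h)" by (simp only: q_def)
      then show ?thesis using mult_right_mono[OF k Y] \<rho>h by simp
    qed
    have "q h + (q (s-1) + q s) \<le> \<rho> s * (l * norm \<delta> * nd)"
      proof -
      have hp: "h \<le> p" "s - 1 \<le> p" using h s by auto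
      show ?thesis using qT[of "{h, s-1, s}"] hp s s1s False by simp
    qed
    then have ineq: "mu/2 * N h + mu/2 * (\<rho> s * nd\<^sup>2) \<le> \<rho> s * (l * norm \<delta> * nd)"
      using two qh by linarith
    have "l * norm \<delta> * nd - mu/2 * nd\<^sup>2 \<le> (l * norm \<delta>)\<^sup>2 / (2 * mu)"
    proof -
      have "0 \<le> (mu * nd - l * norm \<delta>)\<^sup>2 / (2 * mu)" using mu by simp
      also have "\<dots> = (l * norm \<delta>)\<^sup>2 / (2 * mu) - (l * norm \<delta> * nd - mu/2 * nd\<^sup>2)"
        using mu by (simp add: field_simps power2_eq_square)
      finally show ?thesis by simp
    qed
    then have "\<rho> s * (l * norm \<delta> * nd - mu/2 * nd\<^sup>2) \<le> \<rho> s * ((l * norm \<delta>)\<^sup>2 / (2 * mu))"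
      using \<rho>pos[of s] by (intro mult_left_mono) auto
    moreover have "\<rho> s * (l * norm \<delta> * nd - mu/2 * nd\<^sup>2) = \<rho> s * (l * norm \<delta> * nd) - mu/2 * (\<rho> s * nd\<^sup>2)"
      by (simp only: right_diff_distrib mult.left_commute)
    ultimately have "mu/2 * N h \<le> \<rho> s * ((l * norm \<delta>)\<^sup>2 / (2 * mu))"
      using ineq by linarith
    moreover have "\<rho> s * ((l * norm \<delta>)\<^sup>2 / (2 * mu)) = mu/2 * (\<rho> s * (l * norm \<delta> / mu)\<^sup>2)"
      using mu by (simp add: power_divide power2_eq_square)
    ultimately have "N h \<le> \<rho> s * (l * norm \<delta> / mu)\<^sup>2"
      using mu by simp
    also have "\<dots> = (lam ^ dist * (l * norm \<delta> / mu))\<^sup>2" by (simp only: \<rho>s(1) power_mult_distrib)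
    finally have "(norm (U h))\<^sup>2 \<le> (lam ^ dist * (l * norm \<delta> / mu))\<^sup>2" by (simp only: N_def)
    moreover have "0 \<le> lam ^ dist * (l * norm \<delta> / mu)" using lam mu l by simp
    ultimately have "norm (U h) \<le> lam ^ dist * (l * norm \<delta> / mu)"
      by (rule power2_le_imp_le)
    also have "\<dots> \<le> 2 * l / mu * lam ^ dist * norm \<delta>"
    proof -
      have "0 \<le> lam ^ dist * (l * norm \<delta> / mu)" using lam mu l by simp
      moreover have "2 * l / mu * lam ^ dist * norm \<delta> = 2 * (lam ^ dist * (l * norm \<delta> / mu))" by simp
      ultimately show ?thesis by linarith
    qed
    finally show ?thesis using Uh by simp
  qed
  then show ?thesis by (simp only: dist_def \<delta>_def)
qed




definition grad :: "(nat \<Rightarrow> 'a::real_inner \<Rightarrow> 'a) \<Rightarrow> (nat \<Rightarrow> 'a \<times> 'a \<times> 'b::real_inner \<Rightarrow> 'a \<times> 'a \<times> 'b) \<Rightarrow> nat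
    \<Rightarrow> 'a \<Rightarrow> (nat \<Rightarrow> 'b) \<Rightarrow> 'a \<Rightarrow> (nat \<Rightarrow> 'a) \<Rightarrow> nat \<Rightarrow> 'a" where
  "grad Gf Gc p x0 w xp xs t =
     Gf t (traj p x0 xp xs t) + fst (Gc t (traj p x0 xp xs t, traj p x0 xp xs (t-1), w (t-1)))
     + fst (snd (Gc (t+1) (traj p x0 xp xs (t+1), traj p x0 xp xs t, w t)))"

lemma traj_in: "t \<in> {1..p-1} \<Longrightarrow> traj p x0 xp xs t = xs t"
  by (auto simp: traj_def)

lemma traj_upd: "t \<in> {1..p-1} \<Longrightarrow> traj p x0 xp (xs(t := a)) \<tau> = (if \<tau> = t then a else traj p x0 xp xs \<tau>)"
  by (auto simp: traj_def)

lemma traj_cong: "(\<And>t. t \<in> {1..p-1} \<Longrightarrow> xs t = ys t) \<Longrightarrow> \<tau> \<le> p \<Longrightarrow> traj p x0 xp xs \<tau> = traj p x0 xp ys \<tau>"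
  by (auto simp: traj_def)

lemma obj_cong:
  assumes "\<And>t. t \<in> {1..p-1} \<Longrightarrow> xs t = ys t"
  shows "objective f c p x0 w xp xs = objective f c p x0 w xp ys"
proof -
  have "\<And>\<tau>. \<tau> \<le> p \<Longrightarrow> traj p x0 xp xs \<tau> = traj p x0 xp ys \<tau>" using assms by (auto simp: traj_def)
  then show ?thesis unfolding objective_def
    by (intro arg_cong2[where f="(+)"] sum.cong refl) (auto simp: le_diff_conv2)
qed

lemma sq_bound:
  fixes g y :: "'a::real_inner"
  assumes "mu > 0"
  shows "g \<bullet> y + mu/2 * (norm y)\<^sup>2 \<ge> - ((norm g)\<^sup>2 / (2 * mu))"
proof -
  have "0 \<le> (mu * norm y - norm g)\<^sup>2 / (2 * mu)" using assms by simp
  also have "\<dots> = mu/2 * (norm y)\<^sup>2 - norm g * norm y + (norm g)\<^sup>2 / (2 * mu)"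
    using assms by (simp add: field_simps power2_eq_square)
  finally have "mu/2 * (norm y)\<^sup>2 - norm g * norm y \<ge> - ((norm g)\<^sup>2 / (2 * mu))" by simp
  moreover have "g \<bullet> y \<ge> - (norm g * norm y)" using Cauchy_Schwarz_ineq2[of g y] by linarith
  ultimately show ?thesis by linarith
qed

lemma deriv_line:
  fixes g :: "'a::real_inner \<Rightarrow> real"
  assumes "(g has_derivative (\<lambda>h. G \<bullet> h)) (at z)"
  shows "((\<lambda>r. g (z + r *\<^sub>R u)) has_real_derivative (G \<bullet> u)) (at 0)"
proof -
  have lin: "((\<lambda>r::real. z + r *\<^sub>R u) has_derivative (\<lambda>r. r *\<^sub>R u)) (at 0)"
    by (auto intro!: derivative_eq_intros)
  have "((\<lambda>r. g (z + r *\<^sub>R u)) has_derivative (\<lambda>r. G \<bullet> (r *\<^sub>R u))) (at 0)"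
    using has_derivative_compose[OF lin, of g "\<lambda>h. G \<bullet> h"] assms by simp
  then have "((\<lambda>r. g (z + r *\<^sub>R u)) has_derivative (\<lambda>r. (G \<bullet> u) * r)) (at 0)"
    by (simp add: mult.commute)
  then show ?thesis by (simp add: has_field_derivative_def)
qed

context
  fixes f :: "nat \<Rightarrow> 'a::euclidean_space \<Rightarrow> real" and c :: "nat \<Rightarrow> 'a \<times> 'a \<times> 'b::euclidean_space \<Rightarrow> real"
    and Gf :: "nat \<Rightarrow> 'a \<Rightarrow> 'a" and Gc :: "nat \<Rightarrow> 'a \<times> 'a \<times> 'b \<Rightarrow> 'a \<times> 'a \<times> 'b" and p :: nat and mu :: real
  assumes p2: "p \<ge> 2" and mu: "mu > 0"
    and fder: "\<And>\<tau> x. \<tau> \<in> {1..p} \<Longrightarrow> (f \<tau> has_derivative (\<lambda>h. Gf \<tau> x \<bullet> h)) (at x)"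
    and fsc: "\<And>\<tau> x y. \<tau> \<in> {1..p} \<Longrightarrow> f \<tau> y \<ge> f \<tau> x + Gf \<tau> x \<bullet> (y - x) + mu/2 * (norm (y - x))\<^sup>2"
    and cder: "\<And>\<tau> z. \<tau> \<in> {1..p} \<Longrightarrow> (c \<tau> has_derivative (\<lambda>h. Gc \<tau> z \<bullet> h)) (at z)"
    and ccv: "\<And>\<tau> z z'. \<tau> \<in> {1..p} \<Longrightarrow> c \<tau> z' \<ge> c \<tau> z + Gc \<tau> z \<bullet> (z' - z)"
begin

lemma obj_ineq:
  "objective f c p x0 w xp ys \<ge> objective f c p x0 w xp xs +
     (\<Sum>t=1..p-1. grad Gf Gc p x0 w xp xs t \<bullet> (ys t - xs t) + mu/2 * (norm (ys t - xs t))\<^sup>2)"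
proof -
  define Tx where "Tx = traj p x0 xp xs"
  define Ty where "Ty = traj p x0 xp ys"
  define D where "D t = (if t \<in> {1..p-1} then ys t - xs t else 0)" for t
  have TD: "Ty t - Tx t = D t" if "t \<le> p" for t
    using that by (auto simp: Tx_def Ty_def D_def traj_def)
  have D0: "D 0 = 0" and Dp: "D p = 0" by (auto simp: D_def)
  have fpart: "(\<Sum>\<tau>=1..p-1. f \<tau> (Ty \<tau>)) \<ge> (\<Sum>\<tau>=1..p-1. f \<tau> (Tx \<tau>) + (Gf \<tau> (Tx \<tau>) \<bullet> D \<tau> + mu/2 * (norm (D \<tau>))\<^sup>2))"
  proof (rule sum_mono)
    fix \<tau> assume \<tau>: "\<tau> \<in> {1..p-1}"
    then have "\<tau> \<in> {1..p}" "\<tau> \<le> p" by auto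
    from fsc[OF this(1), of "Tx \<tau>" "Ty \<tau>"] TD[OF this(2)]
    show "f \<tau> (Tx \<tau>) + (Gf \<tau> (Tx \<tau>) \<bullet> D \<tau> + mu/2 * (norm (D \<tau>))\<^sup>2) \<le> f \<tau> (Ty \<tau>)" by simp
  qed
  have cpart: "(\<Sum>\<tau>=1..p. c \<tau> (Ty \<tau>, Ty (\<tau>-1), w (\<tau>-1))) \<ge>
     (\<Sum>\<tau>=1..p. c \<tau> (Tx \<tau>, Tx (\<tau>-1), w (\<tau>-1)) + Gc \<tau> (Tx \<tau>, Tx (\<tau>-1), w (\<tau>-1)) \<bullet> (D \<tau>, D (\<tau>-1), 0))"
  proof (rule sum_mono)
    fix \<tau> assume \<tau>: "\<tau> \<in> {1..p}"
    then have "(Ty \<tau>, Ty (\<tau>-1), w (\<tau>-1)) - (Tx \<tau>, Tx (\<tau>-1), w (\<tau>-1)) = (D \<tau>, D (\<tau>-1), 0)"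
      using TD by auto
    with ccv[OF \<tau>, of "(Tx \<tau>, Tx (\<tau>-1), w (\<tau>-1))" "(Ty \<tau>, Ty (\<tau>-1), w (\<tau>-1))"]
    show "c \<tau> (Tx \<tau>, Tx (\<tau>-1), w (\<tau>-1)) + Gc \<tau> (Tx \<tau>, Tx (\<tau>-1), w (\<tau>-1)) \<bullet> (D \<tau>, D (\<tau>-1), 0) \<le> c \<tau> (Ty \<tau>, Ty (\<tau>-1), w (\<tau>-1))"
      by simp
  qed
  have rg: "(\<Sum>\<tau>=1..p. Gc \<tau> (Tx \<tau>, Tx (\<tau>-1), w (\<tau>-1)) \<bullet> (D \<tau>, D (\<tau>-1), 0)) =
      (\<Sum>t=1..p-1. (fst (Gc t (Tx t, Tx (t-1), w (t-1))) + fst (snd (Gc (t+1) (Tx (t+1), Tx (t+1-1), w (t+1-1))))) \<bullet> D t)"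
    unfolding inner_triple by (rule regroup) (use D0 Dp p2 in auto)
  have gsum: "(\<Sum>t=1..p-1. grad Gf Gc p x0 w xp xs t \<bullet> (ys t - xs t) + mu/2 * (norm (ys t - xs t))\<^sup>2)
     = (\<Sum>t=1..p-1. Gf t (Tx t) \<bullet> D t + mu/2 * (norm (D t))\<^sup>2) +
       (\<Sum>t=1..p-1. (fst (Gc t (Tx t, Tx (t-1), w (t-1))) + fst (snd (Gc (t+1) (Tx (t+1), Tx (t+1-1), w (t+1-1))))) \<bullet> D t)"
    unfolding sum.distrib[symmetric] by (rule sum.cong) (auto simp: grad_def Tx_def D_def inner_add_left algebra_simps)
  have "objective f c p x0 w xp ys = (\<Sum>\<tau>=1..p-1. f \<tau> (Ty \<tau>)) + (\<Sum>\<tau>=1..p. c \<tau> (Ty \<tau>, Ty (\<tau>-1), w (\<tau>-1)))"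
    by (simp add: objective_def Ty_def)
  moreover have "objective f c p x0 w xp xs = (\<Sum>\<tau>=1..p-1. f \<tau> (Tx \<tau>)) + (\<Sum>\<tau>=1..p. c \<tau> (Tx \<tau>, Tx (\<tau>-1), w (\<tau>-1)))"
    by (simp add: objective_def Tx_def)
  ultimately show ?thesis using fpart cpart rg gsum by (simp add: sum.distrib)
qed


lemma foc:
  assumes min: "\<forall>ys. objective f c p x0 w xp xs \<le> objective f c p x0 w xp ys" and t: "t \<in> {1..p-1}"
  shows "grad Gf Gc p x0 w xp xs t = 0"
proof -
  define g where "g = grad Gf Gc p x0 w xp xs t"
  define T where "T = traj p x0 xp xs"
  define \<phi> where "\<phi> r = objective f c p x0 w xp (xs(t := xs t + r *\<^sub>R g))" for r
  have tp: "t \<in> {1..p}" "t+1 \<in> {1..p}" "t \<noteq> t + 1" "t - 1 \<noteq> t" "t + 1 - 1 = t" using t by auto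
  have Tu: "traj p x0 xp (xs(t := xs t + r *\<^sub>R g)) \<tau> = (if \<tau> = t then T t + r *\<^sub>R g else T \<tau>)" for r \<tau>
    unfolding T_def using t by (auto simp: traj_def)
  have fterm: "((\<lambda>r. f \<tau> (traj p x0 xp (xs(t := xs t + r *\<^sub>R g)) \<tau>)) has_real_derivative
      (if \<tau> = t then Gf t (T t) \<bullet> g else 0)) (at 0)" if "\<tau> \<in> {1..p-1}" for \<tau>
  proof (cases "\<tau> = t")
    case True
    then show ?thesis using deriv_line[OF fder[OF tp(1), of "T t"], of g] by (simp add: Tu)
  next
    case False then show ?thesis by (simp add: Tu)
  qed
  have cterm: "((\<lambda>r. c \<tau> (traj p x0 xp (xs(t := xs t + r *\<^sub>R g)) \<tau>, traj p x0 xp (xs(t := xs t + r *\<^sub>R g)) (\<tau>-1), w (\<tau>-1))) has_real_derivative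
      ((if \<tau> = t then fst (Gc t (T t, T (t-1), w (t-1))) \<bullet> g else 0) +
       (if \<tau> = t+1 then fst (snd (Gc (t+1) (T (t+1), T t, w t))) \<bullet> g else 0))) (at 0)" if "\<tau> \<in> {1..p}" for \<tau>
  proof -
    consider "\<tau> = t" | "\<tau> = t + 1" | "\<tau> \<noteq> t" "\<tau> \<noteq> t + 1" by blast
    then show ?thesis
    proof cases
      case 1
      have e: "(\<lambda>r. c \<tau> (traj p x0 xp (xs(t := xs t + r *\<^sub>R g)) \<tau>, traj p x0 xp (xs(t := xs t + r *\<^sub>R g)) (\<tau>-1), w (\<tau>-1)))
          = (\<lambda>r. c t ((T t, T (t-1), w (t-1)) + r *\<^sub>R (g, 0, 0)))"
        using 1 tp by (simp add: Tu)
      show ?thesis unfolding e using deriv_line[OF cder[OF tp(1)], of "(T t, T (t-1), w (t-1))" "(g, 0, 0)"] 1 tp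
        by (simp add: inner_triple)
    next
      case 2
      have e: "(\<lambda>r. c \<tau> (traj p x0 xp (xs(t := xs t + r *\<^sub>R g)) \<tau>, traj p x0 xp (xs(t := xs t + r *\<^sub>R g)) (\<tau>-1), w (\<tau>-1)))
          = (\<lambda>r. c (t+1) ((T (t+1), T t, w t) + r *\<^sub>R (0, g, 0)))"
        using 2 tp by (simp add: Tu)
      show ?thesis unfolding e using deriv_line[OF cder[OF tp(2)], of "(T (t+1), T t, w t)" "(0, g, 0)"] 2 tp
        by (simp add: inner_triple)
    next
      case 3
      then have "\<tau> - 1 \<noteq> t" using that by auto
      then show ?thesis using 3 by (simp add: Tu)
    qed
  qed
  have "(\<phi> has_real_derivative
      ((\<Sum>\<tau>=1..p-1. if \<tau> = t then Gf t (T t) \<bullet> g else 0) +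
       (\<Sum>\<tau>=1..p. (if \<tau> = t then fst (Gc t (T t, T (t-1), w (t-1))) \<bullet> g else 0) +
                   (if \<tau> = t+1 then fst (snd (Gc (t+1) (T (t+1), T t, w t))) \<bullet> g else 0)))) (at 0)"
    unfolding \<phi>_def objective_def
    by (intro DERIV_add DERIV_sum fterm cterm) auto
  moreover have "(\<Sum>\<tau>=1..p-1. if \<tau> = t then Gf t (T t) \<bullet> g else 0) +
       (\<Sum>\<tau>=1..p. (if \<tau> = t then fst (Gc t (T t, T (t-1), w (t-1))) \<bullet> g else 0) +
                   (if \<tau> = t+1 then fst (snd (Gc (t+1) (T (t+1), T t, w t))) \<bullet> g else 0)) = g \<bullet> g"
    using t tp by (simp add: sum.distrib sum.delta g_def grad_def T_def inner_add_left)
  ultimately have d: "(\<phi> has_real_derivative g \<bullet> g) (at 0)" by simp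
  have "\<forall>y. \<bar>0 - y\<bar> < 1 \<longrightarrow> \<phi> 0 \<le> \<phi> y"
    using min by (simp add: \<phi>_def)
  from DERIV_local_min[OF d zero_less_one this] have "g \<bullet> g = 0" .
  then show ?thesis by (simp add: g_def)
qed

lemma exists_min: "\<exists>xs. \<forall>ys. objective f c p x0 w xp xs \<le> objective f c p x0 w xp ys"
proof -
  define F where "F = objective f c p x0 w xp"
  define z where "z = (\<lambda>_::nat. 0::'a)"
  define g where "g t = grad Gf Gc p x0 w xp z t" for t
  define Gs where "Gs = (\<Sum>t=1..p-1. norm (g t))"
  define Mq where "Mq = (\<Sum>t=1..p-1. (norm (g t))\<^sup>2 / (2 * mu))"
  define R where "R = 2 * (Gs + Mq + 1) / mu + 1"
  define K where "K t = (if t \<in> {1..p-1} then cball 0 R else {0::'a})" for t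
  define S where "S = PiE UNIV K"
  have Gs0: "Gs \<ge> 0" by (simp add: Gs_def sum_nonneg)
  have Mq0: "Mq \<ge> 0" using mu by (simp add: Mq_def sum_nonneg)
  have R1: "R \<ge> 1" using Gs0 Mq0 mu by (simp add: R_def)
  have "compactin (product_topology (\<lambda>_. euclidean) UNIV) S"
    unfolding S_def by (subst compactin_PiE) (auto simp: K_def)
  then have cS: "compact S" by (simp add: euclidean_product_topology)
  have zS: "z \<in> S" using R1 by (auto simp: S_def K_def z_def)
  have ctraj: "continuous_on UNIV (\<lambda>xs::nat \<Rightarrow> 'a. traj p x0 xp xs \<tau>)" for \<tau>
    by (cases "\<tau> = 0"; cases "\<tau> = p") (simp_all add: traj_def)
  have cf: "continuous_on UNIV (f \<tau>)" if "\<tau> \<in> {1..p}" for \<tau>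
    using has_derivative_continuous[OF fder[OF that]] by (simp add: continuous_at_imp_continuous_on)
  have cc: "continuous_on UNIV (c \<tau>)" if "\<tau> \<in> {1..p}" for \<tau>
    using has_derivative_continuous[OF cder[OF that]] by (simp add: continuous_at_imp_continuous_on)
  have cF: "continuous_on UNIV F"
    unfolding F_def objective_def
  proof (intro continuous_on_add continuous_on_sum)
    fix \<tau> :: nat assume "\<tau> \<in> {1..p-1}"
    then have "\<tau> \<in> {1..p}" by auto
    then show "continuous_on UNIV (\<lambda>xs. f \<tau> (traj p x0 xp xs \<tau>))"
      using continuous_on_compose2[OF cf ctraj] by auto
  next
    fix \<tau> :: nat assume \<tau>: "\<tau> \<in> {1..p}"
    have "continuous_on UNIV (\<lambda>xs::nat \<Rightarrow> 'a. (traj p x0 xp xs \<tau>, traj p x0 xp xs (\<tau>-1), w (\<tau>-1)))"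
      by (intro continuous_on_Pair ctraj continuous_on_const)
    then show "continuous_on UNIV (\<lambda>xs. c \<tau> (traj p x0 xp xs \<tau>, traj p x0 xp xs (\<tau>-1), w (\<tau>-1)))"
      using continuous_on_compose2[OF cc[OF \<tau>]] by auto
  qed
  obtain xs where xs: "xs \<in> S" "\<And>y. y \<in> S \<Longrightarrow> F xs \<le> F y"
    using continuous_attains_inf[OF cS _ continuous_on_subset[OF cF]] zS by blast
  have "F xs \<le> F ys" for ys
  proof -
    define ys' where "ys' t = (if t \<in> {1..p-1} then ys t else 0)" for t
    have Fys: "F ys = F ys'" unfolding F_def by (rule obj_cong) (simp add: ys'_def)
    show ?thesis
    proof (cases "ys' \<in> S")
      case True then show ?thesis using xs Fys by simp
    next
      case False
      have "\<exists>k\<in>{1..p-1}. norm (ys k) > R"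
      proof (rule ccontr)
        assume "\<not> (\<exists>k\<in>{1..p-1}. norm (ys k) > R)"
        then have "ys' \<in> S" by (auto simp: S_def K_def ys'_def PiE_UNIV_domain not_less)
        with False show False by simp
      qed
      then obtain k where k: "k \<in> {1..p-1}" "norm (ys k) > R" by blast
      define Tm where "Tm t = g t \<bullet> (ys' t - z t) + mu/2 * (norm (ys' t - z t))\<^sup>2" for t
      have Tlow: "Tm t \<ge> - ((norm (g t))\<^sup>2 / (2 * mu))" for t
        unfolding Tm_def by (rule sq_bound[OF mu])
      have Tk: "Tm k \<ge> Mq + 1"
      proof -
        have yk: "ys' k - z k = ys k" using k by (simp add: ys'_def z_def)
        have gk: "norm (g k) \<le> Gs" unfolding Gs_def
          using member_le_sum[of k "{1..p-1}" "\<lambda>t. norm (g t)"] k by simp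
        have a: "mu/2 * norm (ys k) - norm (g k) \<ge> Mq + 1"
        proof -
          have "mu/2 * norm (ys k) \<ge> mu/2 * R" using k mu by simp
          also have "mu/2 * R = Gs + Mq + 1 + mu/2" using mu by (simp add: R_def field_simps)
          finally show ?thesis using gk mu by linarith
        qed
        have "Tm k \<ge> - (norm (g k) * norm (ys k)) + mu/2 * (norm (ys k))\<^sup>2"
          unfolding Tm_def yk using Cauchy_Schwarz_ineq2[of "g k" "ys k"] by linarith
        also have "- (norm (g k) * norm (ys k)) + mu/2 * (norm (ys k))\<^sup>2 = norm (ys k) * (mu/2 * norm (ys k) - norm (g k))"
          by (simp add: power2_eq_square algebra_simps)
        also have "\<dots> \<ge> 1 * (Mq + 1)"
          using a k R1 Mq0 by (intro mult_mono) auto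
        finally show ?thesis by simp
      qed
      have "(\<Sum>t=1..p-1. Tm t) = Tm k + (\<Sum>t\<in>{1..p-1} - {k}. Tm t)"
        using k by (simp add: sum.remove)
      moreover have "(\<Sum>t\<in>{1..p-1} - {k}. Tm t) \<ge> (\<Sum>t\<in>{1..p-1} - {k}. - ((norm (g t))\<^sup>2 / (2 * mu)))"
        using Tlow by (intro sum_mono) auto
      moreover have "(\<Sum>t\<in>{1..p-1} - {k}. (norm (g t))\<^sup>2 / (2 * mu)) \<le> Mq"
        unfolding Mq_def using mu by (intro sum_mono2) auto
      ultimately have "(\<Sum>t=1..p-1. Tm t) > 0" using Tk by (simp add: sum_negf)
      moreover have "F ys' \<ge> F z + (\<Sum>t=1..p-1. Tm t)"
        unfolding F_def Tm_def g_def by (rule obj_ineq)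
      moreover have "F xs \<le> F z" using xs zS by simp
      ultimately show ?thesis using Fys by linarith
    qed
  qed
  then show ?thesis unfolding F_def by blast
qed

end



lemma pow_le_powi:
  fixes lam :: real and d :: nat and e :: int
  assumes "0 < lam" "lam \<le> 1" "e \<le> int d"
  shows "lam ^ d \<le> lam powi e"
proof (cases "e \<ge> 0")
  case True
  then have "lam powi e = lam ^ nat e" by (simp add: power_int_def)
  moreover have "nat e \<le> d" using assms(3) True by linarith
  ultimately show ?thesis using assms by (simp add: power_decreasing)
next
  case False
  then have "lam powi e = inverse lam ^ nat (-e)" by (simp add: power_int_def)
  moreover have "inverse lam \<ge> 1" using assms by (simp add: one_le_inverse)
  then have "inverse lam ^ nat (-e) \<ge> 1" by (simp add: one_le_power)
  moreover have "lam ^ d \<le> 1" using assms by (simp add: power_le_one)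
  ultimately show ?thesis by linarith
qed

lemma t1: fixes s :: real assumes "s > 1"
  shows "2 * ((s - 1) / (s + 1)) * ((s\<^sup>2 + 1) / ((s - 1) * (s + 1))) = 2 * (s\<^sup>2 + 1) / (s + 1)\<^sup>2"
proof -
  have n: "s - 1 \<noteq> 0" "s + 1 \<noteq> 0" using assms by auto
  have "2 * ((s - 1) / (s + 1)) * ((s\<^sup>2 + 1) / ((s - 1) * (s + 1))) = ((s - 1) * (2 * (s\<^sup>2 + 1))) / ((s - 1) * ((s + 1) * (s + 1)))"
    by (simp add: algebra_simps)
  also have "\<dots> = 2 * (s\<^sup>2 + 1) / (s + 1)\<^sup>2" using n by (simp add: power2_eq_square)
  finally show ?thesis .
qed
lemma t2: fixes s :: real assumes "s > 1"
  shows "1 + ((s - 1) / (s + 1))\<^sup>2 = 2 * (s\<^sup>2 + 1) / (s + 1)\<^sup>2"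
proof -
  have n: "s + 1 \<noteq> 0" using assms by auto
  have "1 + ((s - 1) / (s + 1))\<^sup>2 = ((s + 1)\<^sup>2 + (s - 1)\<^sup>2) / (s + 1)\<^sup>2"
    using n by (simp add: power_divide add_divide_distrib)
  also have "(s + 1)\<^sup>2 + (s - 1)\<^sup>2 = 2 * (s\<^sup>2 + 1)" by (simp add: power2_eq_square algebra_simps)
  finally show ?thesis .
qed

lemma lam_props:
  fixes mu l :: real
  assumes mu: "mu > 0" and l: "l > 0"
  defines "lam \<equiv> 1 - 2 / (sqrt (1 + 2 * l / mu) + 1)"
  shows "lam > 0" "lam \<le> 1" "2 * lam * (1 + mu/l) = 1 + lam\<^sup>2"
proof -
  define s where "s = sqrt (1 + 2 * l / mu)"
  have s2: "s\<^sup>2 = 1 + 2 * l / mu" using mu l by (simp add: s_def)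
  have s1: "s > 1" using mu l by (simp add: s_def)
  have "lam = 1 - 2 / (s + 1)" by (simp add: lam_def s_def)
  then have lam_s: "lam = (s - 1) / (s + 1)" using s1 by (simp add: field_simps)
  show "lam > 0" using s1 lam_s by simp
  show "lam \<le> 1" using s1 lam_s by simp
  have sm1: "s\<^sup>2 - 1 = 2 * l / mu" using s2 by simp
  have mul: "mu / l = 2 / (s\<^sup>2 - 1)" unfolding sm1 using mu l by (simp add: field_simps)
  have sq: "s\<^sup>2 - 1 = (s - 1) * (s + 1)" by (simp add: power2_eq_square algebra_simps)
  have n1: "s - 1 \<noteq> 0" "s + 1 \<noteq> 0" using s1 by auto
  have ne: "s\<^sup>2 - 1 \<noteq> 0" using sm1 mu l by simp
  have "1 + mu/l = (s\<^sup>2 + 1) / (s\<^sup>2 - 1)"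
    unfolding mul using ne by (simp add: field_simps)
  then have a: "1 + mu/l = (s\<^sup>2 + 1) / ((s - 1) * (s + 1))" by (simp only: sq)
  have "2 * lam * (1 + mu/l) = 2 * (s\<^sup>2 + 1) / (s + 1)\<^sup>2"
    unfolding a lam_s using t1[OF s1] .
  moreover have "1 + lam\<^sup>2 = 2 * (s\<^sup>2 + 1) / (s + 1)\<^sup>2"
    unfolding lam_s using t2[OF s1] .
  ultimately show "2 * lam * (1 + mu/l) = 1 + lam\<^sup>2" by simp
qed



lemma norm_triple_simps:
  fixes v :: "'a::real_normed_vector" and u :: "'b::real_normed_vector"
  shows "norm (v, 0::'a, 0::'b) = norm v" "norm (0::'a, v, 0::'b) = norm v" "norm (0::'a, 0::'a, u) = norm u"
  by (simp_all add: norm_Pair)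

theorem theorem1:
  fixes f :: "nat \<Rightarrow> real^'n \<Rightarrow> real"
    and c :: "nat \<Rightarrow> (real^'n) \<times> (real^'n) \<times> (real^'r) \<Rightarrow> real"
    and p :: nat and \<mu> l :: real
    and x0 x0' xp xp' :: "real^'n" and w w' :: "nat \<Rightarrow> real^'r" and h :: nat
  assumes "p \<ge> 2" and "\<mu> > 0" and "l > 0"
    and "\<And>\<tau>. \<tau> \<in> {1..p} \<Longrightarrow> strongly_convex \<mu> (f \<tau>) \<and> C2 (f \<tau>)"
    and "\<And>\<tau>. \<tau> \<in> {1..p} \<Longrightarrow> convex_on UNIV (c \<tau>) \<and> strongly_smooth l (c \<tau>) \<and> C2 (c \<tau>)"
    and "1 \<le> h" and "h \<le> p - 1"
  shows "norm (psi f c p x0 w xp h - psi f c p x0' w' xp' h)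
     \<le> (let C0 = 2 * l / \<mu>; lam0 = 1 - 2 / (sqrt (1 + 2 * l / \<mu>) + 1) in
        C0 * (lam0 powi (int h - 1) * norm (x0 - x0')
            + (\<Sum>\<tau>=0..p-1. lam0 powi (\<bar>int h - int \<tau>\<bar> - 1) * norm (w \<tau> - w' \<tau>))
            + lam0 powi (int p - int h - 1) * norm (xp - xp')))"
proof -
  note p2 = assms(1) and mu = assms(2) and l = assms(3)
  have hr: "h \<in> {1..p-1}" using assms(6,7) by simp
  have "\<forall>\<tau>\<in>{1..p}. \<exists>G. has_gradient_everywhere (f \<tau>) G \<and>
     (\<forall>x y. f \<tau> y \<ge> f \<tau> x + G x \<bullet> (y - x) + \<mu> / 2 * (norm (y - x))\<^sup>2)"
  proof
    fix \<tau> assume "\<tau> \<in> {1..p}"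
    then have "strongly_convex \<mu> (f \<tau>)" using assms(4) by blast
    then show "\<exists>G. has_gradient_everywhere (f \<tau>) G \<and>
     (\<forall>x y. f \<tau> y \<ge> f \<tau> x + G x \<bullet> (y - x) + \<mu> / 2 * (norm (y - x))\<^sup>2)"
      unfolding strongly_convex_def .
  qed
  from bchoice[OF this] obtain Gf where Gf: "\<forall>\<tau>\<in>{1..p}. has_gradient_everywhere (f \<tau>) (Gf \<tau>) \<and>
     (\<forall>x y. f \<tau> y \<ge> f \<tau> x + Gf \<tau> x \<bullet> (y - x) + \<mu> / 2 * (norm (y - x))\<^sup>2)"
    ..
  have "\<forall>\<tau>\<in>{1..p}. \<exists>G. has_gradient_everywhere (c \<tau>) G \<and>
     (\<forall>x y. c \<tau> y \<le> c \<tau> x + G x \<bullet> (y - x) + l / 2 * (norm (y - x))\<^sup>2)"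
  proof
    fix \<tau> assume "\<tau> \<in> {1..p}"
    then have "strongly_smooth l (c \<tau>)" using assms(5) by blast
    then show "\<exists>G. has_gradient_everywhere (c \<tau>) G \<and>
     (\<forall>x y. c \<tau> y \<le> c \<tau> x + G x \<bullet> (y - x) + l / 2 * (norm (y - x))\<^sup>2)"
      unfolding strongly_smooth_def .
  qed
  from bchoice[OF this] obtain Gc where Gc: "\<forall>\<tau>\<in>{1..p}. has_gradient_everywhere (c \<tau>) (Gc \<tau>) \<and>
     (\<forall>x y. c \<tau> y \<le> c \<tau> x + Gc \<tau> x \<bullet> (y - x) + l / 2 * (norm (y - x))\<^sup>2)"
    ..
  have fder: "\<And>\<tau> x. \<tau> \<in> {1..p} \<Longrightarrow> (f \<tau> has_derivative (\<lambda>h. Gf \<tau> x \<bullet> h)) (at x)"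
    using Gf unfolding has_gradient_everywhere_def by blast
  have fsc: "\<And>\<tau> x y. \<tau> \<in> {1..p} \<Longrightarrow> f \<tau> y \<ge> f \<tau> x + Gf \<tau> x \<bullet> (y - x) + \<mu>/2 * (norm (y - x))\<^sup>2"
    using Gf by blast
  have cder: "\<And>\<tau> z. \<tau> \<in> {1..p} \<Longrightarrow> (c \<tau> has_derivative (\<lambda>h. Gc \<tau> z \<bullet> h)) (at z)"
    using Gc unfolding has_gradient_everywhere_def by blast
  have csm: "\<And>\<tau> x y. \<tau> \<in> {1..p} \<Longrightarrow> c \<tau> y \<le> c \<tau> x + Gc \<tau> x \<bullet> (y - x) + l / 2 * (norm (y - x))\<^sup>2"
    using Gc by blast
  have ccv: "\<And>\<tau> z z'. \<tau> \<in> {1..p} \<Longrightarrow> c \<tau> z' \<ge> c \<tau> z + Gc \<tau> z \<bullet> (z' - z)"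
  proof -
    fix \<tau> z z' assume \<tau>: "\<tau> \<in> {1..p}"
    show "c \<tau> z' \<ge> c \<tau> z + Gc \<tau> z \<bullet> (z' - z)"
      by (rule convex_grad_ineq) (use assms(5)[OF \<tau>] cder[OF \<tau>] in auto)
  qed
  have coco: "\<And>\<tau> z z'. \<tau> \<in> {1..p} \<Longrightarrow> (Gc \<tau> z - Gc \<tau> z') \<bullet> (z - z') \<ge> (norm (Gc \<tau> z - Gc \<tau> z'))\<^sup>2 / l"
  proof -
    fix \<tau> z z' assume \<tau>: "\<tau> \<in> {1..p}"
    show "(Gc \<tau> z - Gc \<tau> z') \<bullet> (z - z') \<ge> (norm (Gc \<tau> z - Gc \<tau> z'))\<^sup>2 / l"
      by (rule cocoercive[OF l]) (use ccv[OF \<tau>] csm[OF \<tau>] in auto)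
  qed
  have mono: "\<And>t x y. t \<in> {1..p-1} \<Longrightarrow> (Gf t x - Gf t y) \<bullet> (x - y) \<ge> \<mu> * (norm (x - y))\<^sup>2"
  proof -
    fix t x y assume t: "t \<in> {1..p-1}"
    then have "t \<in> {1..p}" by auto
    show "(Gf t x - Gf t y) \<bullet> (x - y) \<ge> \<mu> * (norm (x - y))\<^sup>2"
      by (rule strong_mono) (use fsc[OF \<open>t \<in> {1..p}\<close>] in auto)
  qed
  define lam where "lam = 1 - 2 / (sqrt (1 + 2 * l / \<mu>) + 1)"
  have lam1: "lam > 0" and lam2: "lam \<le> 1" and lam3: "2 * lam * (1 + \<mu>/l) = 1 + lam\<^sup>2"
    using lam_props[OF mu l] by (simp_all add: lam_def)
  define A where "A k = (if k = 0 then x0' else x0)" for k :: nat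
  define Wk where "Wk k = (if k = p + 2 then w else (\<lambda>\<tau>. if \<tau> + 1 < k then w \<tau> else w' \<tau>))" for k :: nat
  define B where "B k = (if k = p + 2 then xp else xp')" for k :: nat
  define \<psi> where "\<psi> k = psi f c p (A k) (Wk k) (B k)" for k
  define X where "X k = traj p (A k) (B k) (\<psi> k)" for k
  have minK: "\<forall>ys. objective f c p (A k) (Wk k) (B k) (\<psi> k) \<le> objective f c p (A k) (Wk k) (B k) ys" for k
    unfolding \<psi>_def psi_def by (rule someI_ex[OF exists_min[OF p2 mu fder fsc cder ccv]])
  have focK: "Gf t (X k t) + fst (Gc t (X k t, X k (t-1), Wk k (t-1))) + fst (snd (Gc (t+1) (X k (t+1), X k t, Wk k t))) = 0"
    if "t \<in> {1..p-1}" for k t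
    using foc[OF p2 mu fder fsc cder ccv minK that] by (simp add: grad_def X_def)
  have X0: "X k 0 = A k" and Xp: "X k p = B k" for k using p2 by (auto simp: X_def traj_def)
  have Xh: "X k h = \<psi> k h" for k using hr by (simp add: X_def traj_in)
  define C0 where "C0 = 2 * l / \<mu>"
  have C0: "C0 \<ge> 0" using mu l by (simp add: C0_def)
  define bnd where "bnd k = (if k = 0 then C0 * lam ^ (h - 1) * norm (x0 - x0')
      else if k = p + 1 then C0 * lam ^ (p - 1 - h) * norm (xp - xp')
      else C0 * lam ^ (if k \<le> h then h - k else k - 1 - h) * norm (w (k-1) - w' (k-1)))" for k
  have step: "norm (X (k+1) h - X k h) \<le> bnd k" if k: "k < p + 2" for k
  proof -
    define sk where "sk = (if k = 0 then 1 else if k = p + 1 then p else k)"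
    have sk: "sk \<in> {1..p}" using k p2 by (auto simp: sk_def)
    have single: "(\<tau> = p \<longrightarrow> X (k+1) p = X k p) \<and> (\<tau> = 1 \<longrightarrow> X (k+1) 0 = X k 0) \<and> Wk (k+1) (\<tau>-1) = Wk k (\<tau>-1)"
      if "\<tau> \<in> {1..p}" "\<tau> \<noteq> sk" for \<tau>
      using that k p2 by (auto simp: X0 Xp A_def B_def Wk_def sk_def)
    have K: "norm (X (k+1) h - X k h) \<le> 2 * l / \<mu> * lam ^ (if sk \<le> h then h - sk else sk - 1 - h) *
       norm (if sk = p then X (k+1) p - X k p else 0, if sk = 1 then X (k+1) 0 - X k 0 else 0, Wk (k+1) (sk-1) - Wk k (sk-1))"
      by (rule key[where X="X (k+1)" and X'="X k" and W="Wk (k+1)" and W'="Wk k" and s=sk and h=h,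
            OF p2 mu l lam1 lam3 mono coco focK[of _ "k+1"] focK[of _ k] sk single hr])
    consider "k = 0" | "k = p + 1" | "1 \<le> k" "k \<le> p" using k by linarith
    then show ?thesis
    proof cases
      case 1
      then have "sk = 1" "1 \<noteq> p" using p2 by (auto simp: sk_def)
      moreover have "Wk (k+1) 0 = Wk k 0" using 1 p2 by (simp add: Wk_def)
      ultimately show ?thesis using K 1 hr by (simp add: X0 A_def bnd_def C0_def norm_triple_simps)
    next
      case 2
      then have "sk = p" "p \<noteq> 1" "\<not> p \<le> h" using p2 hr by (auto simp: sk_def)
      moreover have "Wk (k+1) (p-1) = Wk k (p-1)" using 2 p2 by (simp add: Wk_def)
      ultimately show ?thesis using K 2 by (simp add: Xp B_def bnd_def C0_def norm_triple_simps)
    next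
      case 3
      then have skk: "sk = k" by (auto simp: sk_def)
      have z: "X (k+1) p - X k p = 0" "X (k+1) 0 - X k 0 = 0" using 3 by (auto simp: Xp X0 B_def A_def)
      have ww: "Wk (k+1) (k-1) = w (k-1)" "Wk k (k-1) = w' (k-1)" using 3 by (auto simp: Wk_def)
      have d: "(if sk = p then X (k+1) p - X k p else 0, if sk = 1 then X (k+1) 0 - X k 0 else 0, Wk (k+1) (sk-1) - Wk k (sk-1))
          = (0, 0, w (k-1) - w' (k-1))"
        by (simp only: z if_cancel skk ww)
      have e: "(if sk \<le> h then h - sk else sk - 1 - h) = (if k \<le> h then h - k else k - 1 - h)"
        by (simp only: skk)
      have "k \<noteq> 0" "k \<noteq> p + 1" using 3 by auto
      then show ?thesis using K unfolding d e by (simp add: bnd_def C0_def norm_triple_simps)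
    qed
  qed
  have tel: "X (p+2) h - X 0 h = (\<Sum>k<p+2. X (k+1) h - X k h)"
    using sum_lessThan_telescope[of "\<lambda>k. X k h" "p+2"] by simp
  have "norm (X (p+2) h - X 0 h) \<le> (\<Sum>k<p+2. norm (X (k+1) h - X k h))"
    unfolding tel by (rule norm_sum)
  also have "\<dots> \<le> (\<Sum>k<p+2. bnd k)" using step by (intro sum_mono) auto
  also have "(\<Sum>k<p+2. bnd k) = bnd 0 + (\<Sum>\<tau>=0..p-1. bnd (\<tau>+1)) + bnd (p+1)"
  proof -
    have "(\<Sum>k<p+2. bnd k) = (\<Sum>k<p+1. bnd k) + bnd (p+1)" by simp
    moreover have "(\<Sum>k<p+1. bnd k) = (\<Sum>k=0..p. bnd k)" by (rule sum.cong) auto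
    moreover have "(\<Sum>k=0..p. bnd k) = bnd 0 + (\<Sum>k=1..p. bnd k)" by (simp add: sum.atLeast_Suc_atMost)
    moreover have "(\<Sum>k=1..p. bnd k) = (\<Sum>\<tau>=0..p-1. bnd (\<tau>+1))"
    proof -
      obtain q where q: "p = Suc q" using p2 by (cases p) auto
      show ?thesis unfolding q One_nat_def sum.shift_bounds_cl_Suc_ivl by simp
    qed
    ultimately show ?thesis by simp
  qed
  also have "\<dots> \<le> C0 * (lam powi (int h - 1) * norm (x0 - x0')
            + (\<Sum>\<tau>=0..p-1. lam powi (\<bar>int h - int \<tau>\<bar> - 1) * norm (w \<tau> - w' \<tau>))
            + lam powi (int p - int h - 1) * norm (xp - xp'))"
  proof -
    have b0: "bnd 0 \<le> C0 * (lam powi (int h - 1) * norm (x0 - x0'))"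
    proof -
      have "lam ^ (h - 1) \<le> lam powi (int h - 1)" using lam1 lam2 hr by (intro pow_le_powi) auto
      then show ?thesis using C0 by (simp add: bnd_def mult_left_mono mult_right_mono mult.assoc)
    qed
    have bp: "bnd (p+1) \<le> C0 * (lam powi (int p - int h - 1) * norm (xp - xp'))"
    proof -
      have "lam ^ (p - 1 - h) \<le> lam powi (int p - int h - 1)" using lam1 lam2 hr by (intro pow_le_powi) auto
      then show ?thesis using C0 by (simp add: bnd_def mult_left_mono mult_right_mono mult.assoc)
    qed
    have bw: "bnd (\<tau>+1) \<le> C0 * (lam powi (\<bar>int h - int \<tau>\<bar> - 1) * norm (w \<tau> - w' \<tau>))" if "\<tau> \<in> {0..p-1}" for \<tau>
    proof -
      define a where "a = lam ^ (if \<tau> + 1 \<le> h then h - (\<tau> + 1) else \<tau> + 1 - 1 - h)"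
      have ab: "a \<le> lam powi (\<bar>int h - int \<tau>\<bar> - 1)"
        unfolding a_def using lam1 lam2 by (intro pow_le_powi) auto
      have m: "C0 * a * norm (w \<tau> - w' \<tau>) \<le> C0 * (lam powi (\<bar>int h - int \<tau>\<bar> - 1) * norm (w \<tau> - w' \<tau>))"
        unfolding mult.assoc using ab C0 by (intro mult_left_mono mult_right_mono) auto
      have "\<tau> + 1 \<noteq> p + 1" "\<tau> + 1 \<noteq> 0" using that p2 by auto
      then have "bnd (\<tau>+1) = C0 * a * norm (w \<tau> - w' \<tau>)" unfolding bnd_def a_def by simp
      then show ?thesis using m by simp
    qed
    have "(\<Sum>\<tau>=0..p-1. bnd (\<tau>+1)) \<le> (\<Sum>\<tau>=0..p-1. C0 * (lam powi (\<bar>int h - int \<tau>\<bar> - 1) * norm (w \<tau> - w' \<tau>)))"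
      using bw by (intro sum_mono) auto
    then show ?thesis using b0 bp by (simp add: distrib_left sum_distrib_left)
  qed
  finally show ?thesis
    using Xh by (simp add: Let_def C0_def lam_def \<psi>_def A_def B_def Wk_def)
qed


end
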